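(* Let $p>2$ be the exponent of (P), $\varepsilon\in(0,2)$, $\rho>0$, and $\gamma$ with $1>\gamma\ge\frac2p+\frac\varepsilon2+\frac{\rho}{2p}$, and let $C>0$. Then there is a constant $C_{\rm osc}>0$ independent of $h$ such that every strictly positive $u_h\in U_h$ with $\mathcal E_h(u_h)\le Ch^{-\rho/(2+p)}$ satisfies $$\frac{u_h(x_i,y_j)}{u_h(x_{\hat i},y_{\hat j})}\le C_{\rm osc}$$ for all $i\in\{1,\dots,N_x\}$, $j\in\{1,\dots,N_y\}$, $\hat i\in\{i-1,i,i+1\}$ and $\hat j\in\{j-1,j,j+1\}$ (indices taken periodically).
   Context: Discretization setting. Let $L_x,L_y>0$, $\mathcal O^x=(0,L_x)$, $\mathcal O^y=(0,L_y)$, $\mathcal O=\mathcal O^x\times\mathcal O^y$; all functions are $\mathcal O$-periodic. For $h\in(0,1)$ let $h_x=L_x/N_x$, $h_y=L_y/N_y$ with $\hat c_1h\le h_x,h_y\le\hat C_2h$ for fixed constants $0<\hat c_1\le\hat C_2$ (Assumption (S)). Nodes are $x_i=(i-1)h_x$ and $y_j=(j-1)h_y$, with indices taken periodically. $U_h$ is the space of continuous periodic functions on $\overline{\mathcal O}$ that are bilinear on each rectangle $(x_i,x_{i+1})\times(y_j,y_{j+1})$. $\mathcal I_h^x$ and $\mathcal I_h^y$ are the nodal (piecewise linear) interpolation operators in $x$ and in $y$, each acting in its own variable for fixed value of the other; $\mathcal I_h^{xy}=\mathcal I_h^x\mathcal I_h^y$. For $u_h\in U_h$, $\Delta_hu_h\in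 U_h$ is the discrete Laplacian, given at nodes by the standard five-point formula $\Delta_hu_h=\frac{u_h(x+h_x,y)-2u_h(x,y)+u_h(x-h_x,y)}{h_x^2}+\frac{u_h(x,y+h_y)-2u_h(x,y)+u_h(x,y-h_y)}{h_y^2}$. (P): $F\in C^2((0,\infty))$, $F=+\infty$ on $(-\infty,0]$, and there are $p>2$ and positive constants with $F(u)\ge c_1u^{-p}$, $|F'(u)|\le\hat Cu^{-p-1}+\hat C$, and $\tilde c_1u^{-p-2}-\tilde c_2\le F''(u)\le\tilde Cu^{-p-2}+\tilde C$ for $u>0$. The regularized discrete energy is $$\mathcal E_h(u_h)=\tfrac12\int_{\mathcal O}\big[\mathcal I_h^y(|\partial_xu_h|^2)+\mathcal I_h^x(|\partial_yu_h|^2)\big]+\int_{\mathcal O}\mathcal I_h^{xy}(F(u_h))+\tfrac{h^\varepsilon}{2}\int_{\mathcal O}\mathcal I_h^{xy}(|\Delta_hu_h|^2).$$ *)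

theory Defs
  imports "HOL-Analysis.Analysis"
begin

definition node :: "real \<Rightarrow> int \<Rightarrow> real" where
  "node hh i = real_of_int (i - 1) * hh"

definition Uh :: "real \<Rightarrow> real \<Rightarrow> real \<Rightarrow> real \<Rightarrow> (real \<times> real \<Rightarrow> real) set" where
  "Uh Lx Ly hx hy = {u. continuous_on UNIV u
     \<and> (\<forall>x y. u (x + Lx, y) = u (x, y) \<and> u (x, y + Ly) = u (x, y))
     \<and> (\<forall>i j::int. \<exists>a b c d. \<forall>x y.
          x \<in> {of_int i * hx <..< of_int (i+1) * hx} \<longrightarrow>
          y \<in> {of_int j * hy <..< of_int (j+1) * hy} \<longrightarrow>
          u (x, y) = a + b * x + c * y + d * x * y)}"

definition pdx :: "(real \<times> real \<Rightarrow> real) \<Rightarrow> real \<times> real \<Rightarrow> real" where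
  "pdx u z = deriv (\<lambda>s. u (s, snd z)) (fst z)"

definition pdy :: "(real \<times> real \<Rightarrow> real) \<Rightarrow> real \<times> real \<Rightarrow> real" where
  "pdy u z = deriv (\<lambda>t. u (fst z, t)) (snd z)"

definition interp_x :: "real \<Rightarrow> (real \<times> real \<Rightarrow> real) \<Rightarrow> real \<times> real \<Rightarrow> real" where
  "interp_x hx g z = (let i = \<lfloor>fst z / hx\<rfloor>; t = fst z / hx - of_int i in
      (1 - t) * g (of_int i * hx, snd z) + t * g (of_int (i + 1) * hx, snd z))"

definition interp_y :: "real \<Rightarrow> (real \<times> real \<Rightarrow> real) \<Rightarrow> real \<times> real \<Rightarrow> real" where
  "interp_y hy g z = (let j = \<lfloor>snd z / hy\<rfloor>; t = snd z / hy - of_int j in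
      (1 - t) * g (fst z, of_int j * hy) + t * g (fst z, of_int (j + 1) * hy))"

definition interp_xy :: "real \<Rightarrow> real \<Rightarrow> (real \<times> real \<Rightarrow> real) \<Rightarrow> real \<times> real \<Rightarrow> real" where
  "interp_xy hx hy g = interp_x hx (interp_y hy g)"

definition five_point :: "real \<Rightarrow> real \<Rightarrow> (real \<times> real \<Rightarrow> real) \<Rightarrow> real \<times> real \<Rightarrow> real" where
  "five_point hx hy u z = (case z of (x, y) \<Rightarrow>
      (u (x + hx, y) - 2 * u (x, y) + u (x - hx, y)) / hx\<^sup>2
    + (u (x, y + hy) - 2 * u (x, y) + u (x, y - hy)) / hy\<^sup>2)"

definition disc_lap :: "real \<Rightarrow> real \<Rightarrow> (real \<times> real \<Rightarrow> real) \<Rightarrow> real \<times> real \<Rightarrow> real" where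
  "disc_lap hx hy u = interp_xy hx hy (five_point hx hy u)"

definition energy_h ::
  "real \<Rightarrow> real \<Rightarrow> real \<Rightarrow> real \<Rightarrow> real \<Rightarrow> real \<Rightarrow> (real \<Rightarrow> real) \<Rightarrow> (real \<times> real \<Rightarrow> real) \<Rightarrow> real" where
  "energy_h Lx Ly hx hy h eps F u =
     1/2 * integral (cbox (0,0) (Lx,Ly))
        (\<lambda>z. interp_y hy (\<lambda>w. (pdx u w)\<^sup>2) z + interp_x hx (\<lambda>w. (pdy u w)\<^sup>2) z)
   + integral (cbox (0,0) (Lx,Ly)) (interp_xy hx hy (\<lambda>w. F (u w)))
   + h powr eps / 2 * integral (cbox (0,0) (Lx,Ly)) (interp_xy hx hy (\<lambda>w. (disc_lap hx hy u w)\<^sup>2))"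

end

theory Submission
  imports Defs
begin


definition hat :: "real \<Rightarrow> int \<Rightarrow> real \<Rightarrow> real" where
  "hat h i x = max 0 (1 - \<bar>x/h - of_int i\<bar>)"

lemma hat_nonneg: "hat h i x \<ge> 0" by (simp add: hat_def)

lemma hat_cont: "h > 0 \<Longrightarrow> continuous_on S (\<lambda>x. hat h i x)"
  unfolding hat_def by (intro continuous_intros) auto

lemma hat_sum:
  fixes h x :: real and I :: "int set" and a :: "int \<Rightarrow> real"
  assumes h: "h>0" and fin: "finite I" and k: "\<lfloor>x/h\<rfloor> \<in> I" "\<lfloor>x/h\<rfloor>+1 \<in> I"
  shows "(\<Sum>i\<in>I. a i * hat h i x) = (1 - (x/h - \<lfloor>x/h\<rfloor>)) * a \<lfloor>x/h\<rfloor> + (x/h - \<lfloor>x/h\<rfloor>) * a (\<lfloor>x/h\<rfloor>+1)"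
proof -
  define k where "k = \<lfloor>x/h\<rfloor>"
  define t where "t = x/h - k"
  have t: "0 \<le> t" "t < 1" unfolding t_def k_def by linarith+
  have xk: "x/h = k + t" unfolding t_def by simp
  have h0: "hat h k x = 1 - t" using t unfolding hat_def xk by simp
  have h1: "hat h (k+1) x = t" using t unfolding hat_def xk by simp
  have hz: "hat h i x = 0" if "i \<notin> {k, k+1}" for i
  proof -
    have "i \<le> k - 1 \<or> i \<ge> k + 2" using that by auto
    hence "real_of_int i \<le> k - 1 \<or> real_of_int i \<ge> k + 2" by (metis of_int_diff of_int_le_iff of_int_add of_int_1 of_int_numeral) 
    thus ?thesis using t unfolding hat_def xk by auto
  qed
  have "(\<Sum>i\<in>I. a i * hat h i x) = (\<Sum>i\<in>{k,k+1}. a i * hat h i x)"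
    by (rule sum.mono_neutral_right) (use fin k hz in \<open>auto simp: k_def\<close>)
  also have "\<dots> = a k * (1-t) + a (k+1) * t" using h0 h1 by simp
  finally show ?thesis unfolding t_def k_def by (simp add: algebra_simps)
qed

lemma floor_range:
  fixes x h :: real and N :: nat
  assumes "h > 0" "0 \<le> x" "x \<le> real N * h"
  shows "\<lfloor>x/h\<rfloor> \<in> {0..int N + 1}" "\<lfloor>x/h\<rfloor> + 1 \<in> {0..int N + 1}"
proof -
  have "0 \<le> x/h" using assms by simp
  moreover have "x/h \<le> real N" using assms by (simp add: divide_le_eq)
  ultimately have "0 \<le> \<lfloor>x/h\<rfloor>" "\<lfloor>x/h\<rfloor> \<le> int N"
    by (simp, metis floor_mono floor_of_nat)
  thus "\<lfloor>x/h\<rfloor> \<in> {0..int N + 1}" "\<lfloor>x/h\<rfloor> + 1 \<in> {0..int N + 1}" by auto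
qed

lemma interp_y_repr:
  assumes "hy > 0" "0 \<le> y" "y \<le> real Ny * hy"
  shows "interp_y hy g (x,y) = (\<Sum>j\<in>{0..int Ny+1}. g (x, of_int j * hy) * hat hy j y)"
  unfolding interp_y_def Let_def
  by (subst hat_sum[OF assms(1)]) (use floor_range[OF assms] in auto)

lemma interp_xy_repr:
  assumes hx: "hx > 0" and hy: "hy > 0" and x: "0 \<le> x" "x \<le> real Nx * hx"
    and y: "0 \<le> y" "y \<le> real Ny * hy"
  shows "interp_xy hx hy g (x,y) = (\<Sum>i\<in>{0..int Nx+1}.
     (\<Sum>j\<in>{0..int Ny+1}. g (of_int i * hx, of_int j * hy) * hat hy j y) * hat hx i x)"
proof -
  have "interp_xy hx hy g (x,y) = (\<Sum>i\<in>{0..int Nx+1}. interp_y hy g (of_int i * hx, y) * hat hx i x)"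
    unfolding interp_xy_def interp_x_def Let_def
    by (subst hat_sum[OF hx]) (use floor_range[OF hx x] in auto)
  also have "\<dots> = (\<Sum>i\<in>{0..int Nx+1}.
     (\<Sum>j\<in>{0..int Ny+1}. g (of_int i * hx, of_int j * hy) * hat hy j y) * hat hx i x)"
    by (simp add: interp_y_repr[OF hy y])
  finally show ?thesis .
qed

lemma hat_cont'[continuous_intros]:
  "h > 0 \<Longrightarrow> continuous_on S f \<Longrightarrow> continuous_on S (\<lambda>z. hat h i (f z))"
  unfolding hat_def by (intro continuous_intros) auto

lemma hat_half:
  assumes "h > 0" "of_int i * h \<le> x" "x \<le> of_int i * h + h/2"
  shows "hat h i x \<ge> 1/2"
proof -
  have "of_int i \<le> x/h" "x/h \<le> of_int i + 1/2"
    using assms by (simp_all add: field_simps)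
  thus ?thesis unfolding hat_def by auto
qed

lemma interp_integral_lb:
  fixes g :: "real \<times> real \<Rightarrow> real"
  assumes hx: "hx > 0" and hy: "hy > 0" and Lx: "Lx = real Nx * hx" and Ly: "Ly = real Ny * hy"
    and gnn: "\<And>i j::int. g (of_int i * hx, of_int j * hy) \<ge> 0"
    and i0: "0 \<le> i0" "i0 < int Nx" and j0: "0 \<le> j0" "j0 < int Ny"
  shows "hx*hy/16 * g (of_int i0 * hx, of_int j0 * hy) \<le> integral (cbox (0,0) (Lx,Ly)) (interp_xy hx hy g)"
proof -
  define I where "I = {0..int Nx+1}"
  define J where "J = {0..int Ny+1}"
  define S where "S = (\<lambda>z::real\<times>real. (\<Sum>i\<in>I.
     (\<Sum>j\<in>J. g (of_int i * hx, of_int j * hy) * hat hy j (snd z)) * hat hx i (fst z)))"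
  let ?B = "cbox (0,0) (Lx,Ly) :: (real\<times>real) set"
  have cont: "continuous_on X S" for X
    unfolding S_def using hx hy by (intro continuous_intros) auto
  have eq: "interp_xy hx hy g z = S z" if "z \<in> ?B" for z
  proof -
    obtain x y where z: "z = (x,y)" by (cases z)
    have "0 \<le> x" "x \<le> real Nx * hx" "0 \<le> y" "y \<le> real Ny * hy"
      using that Lx Ly by (auto simp: z cbox_Pair_iff)
    thus ?thesis unfolding z S_def I_def J_def by (simp add: interp_xy_repr[OF hx hy])
  qed
  have Snn: "S z \<ge> 0" for z
    unfolding S_def by (intro sum_nonneg mult_nonneg_nonneg gnn hat_nonneg)
  define gb where "gb = g (of_int i0 * hx, of_int j0 * hy)"
  have gb: "gb \<ge> 0" unfolding gb_def by (rule gnn)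
  define Q where "Q = cbox (of_int i0 * hx, of_int j0 * hy) (of_int i0 * hx + hx/2, of_int j0 * hy + hy/2)"
  have i0': "real_of_int i0 + 1 \<le> real Nx" using i0 by linarith
  have j0': "real_of_int j0 + 1 \<le> real Ny" using j0 by linarith
  have QB: "Q \<subseteq> ?B"
  proof
    fix z assume "z \<in> Q"
    then obtain x y where z: "z = (x,y)" and xy: "of_int i0 * hx \<le> x" "x \<le> of_int i0 * hx + hx/2"
       "of_int j0 * hy \<le> y" "y \<le> of_int j0 * hy + hy/2"
      unfolding Q_def by (cases z) (auto simp: cbox_Pair_iff)
    have "of_int i0 * hx + hx/2 \<le> real Nx * hx"
      using mult_right_mono[OF i0' less_imp_le[OF hx]] hx by (simp add: algebra_simps)
    moreover have "of_int j0 * hy + hy/2 \<le> real Ny * hy"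
      using mult_right_mono[OF j0' less_imp_le[OF hy]] hy by (simp add: algebra_simps)
    moreover have "0 \<le> of_int i0 * hx" "0 \<le> of_int j0 * hy" using i0 j0 hx hy by auto
    ultimately show "z \<in> ?B" using xy Lx Ly by (auto simp: z cbox_Pair_iff)
  qed
  have lbQ: "gb / 4 \<le> S z" if zQ: "z \<in> Q" for z
  proof -
    obtain x y where z: "z = (x,y)" and xy: "of_int i0 * hx \<le> x" "x \<le> of_int i0 * hx + hx/2"
       "of_int j0 * hy \<le> y" "y \<le> of_int j0 * hy + hy/2"
      using zQ unfolding Q_def by (cases z) (auto simp: cbox_Pair_iff)
    have h1: "hat hx i0 x \<ge> 1/2" by (rule hat_half[OF hx xy(1,2)])
    have h2: "hat hy j0 y \<ge> 1/2" by (rule hat_half[OF hy xy(3,4)])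
    have "gb / 4 \<le> gb * hat hy j0 y * hat hx i0 x"
    proof -
      have "1/4 \<le> hat hy j0 y * hat hx i0 x"
        using mult_mono[OF h2 h1] hat_nonneg[of hy j0 y] by simp
      from mult_left_mono[OF this gb] show ?thesis by (simp add: mult.assoc)
    qed
    also have "\<dots> \<le> (\<Sum>j\<in>J. g (of_int i0 * hx, of_int j * hy) * hat hy j y) * hat hx i0 x"
      unfolding gb_def
      by (intro mult_right_mono member_le_sum hat_nonneg mult_nonneg_nonneg gnn)
         (use j0 in \<open>auto simp: J_def\<close>)
    also have "\<dots> \<le> S z"
      unfolding S_def z fst_conv snd_conv
      by (rule member_le_sum) (use i0 in \<open>auto simp: I_def intro!: hat_nonneg mult_nonneg_nonneg gnn sum_nonneg\<close>)
    finally show ?thesis .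
  qed
  have "hx*hy/16 * gb = integral Q (\<lambda>_. gb/4)"
    unfolding Q_def using hx hy by (simp add: content_Pair)
  also have "\<dots> \<le> integral Q S"
    unfolding Q_def by (rule integral_le) (use lbQ cont in \<open>auto simp: Q_def intro!: integrable_continuous\<close>)
  also have "\<dots> \<le> integral ?B S"
    by (rule integral_subset_le[OF QB]) (use Snn cont in \<open>auto simp: Q_def intro!: integrable_continuous\<close>)
  also have "\<dots> = integral ?B (interp_xy hx hy g)"
    by (rule integral_cong) (simp add: eq)
  finally show ?thesis unfolding gb_def .
qed



lemma lower_from_powr:
  fixes v Q h p s :: real
  assumes v: "v > 0" and p: "p > 0" and Q: "Q > 0" and h: "h > 0"
    and le: "v powr (-p) \<le> Q * h powr (-(s+2))"
  shows "Q powr (-1/p) * h powr ((s+2)/p) \<le> v"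
proof -
  have "(Q * h powr (-(s+2))) powr (-1/p) \<le> (v powr (-p)) powr (-1/p)"
    by (rule powr_mono2') (use p v le in auto)
  also have "\<dots> = v" using p v by (simp add: powr_powr)
  also have "(Q * h powr (-(s+2))) powr (-1/p) = Q powr (-1/p) * h powr ((s+2)/p)"
  proof -
    have "- (s + 2) * (- 1 / p) = (s+2)/p" using p by (simp add: field_simps)
    thus ?thesis by (simp only: powr_mult powr_powr)
  qed
  finally show ?thesis .
qed

lemma key_ineq:
  fixes h v L P Q p s e :: real
  assumes h: "0 < h" "h < 1" and v: "v > 0" and p: "p > 0" and Q: "Q > 0" and P: "P \<ge> 0"
    and hv: "v powr (-p) \<le> Q * h powr (-(s+2))"
    and hL: "L^2 \<le> P * h powr (-(s+e+2))"
    and ex: "(s+2)/p \<le> 1 - (s+e)/2"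
  shows "h^2 * L \<le> sqrt P * Q powr (1/p) * v"
proof (cases "L \<le> 0")
  case True
  have "h^2 * L \<le> 0" using True by (simp add: mult_nonneg_nonpos)
  also have "0 \<le> sqrt P * Q powr (1/p) * v" using P v by simp
  finally show ?thesis .
next
  case False
  have L: "L \<le> sqrt P * h powr (-(s+e+2)/2)"
  proof -
    have "L = sqrt (L^2)" using False by simp
    also have "\<dots> \<le> sqrt (P * h powr (-(s+e+2)))" using hL by (simp only: real_sqrt_le_iff)
    also have "\<dots> = sqrt P * h powr (-(s+e+2)/2)"
      by (simp only: real_sqrt_mult powr_half_sqrt_powr[OF less_imp_le[OF h(1)]])
    finally show ?thesis .
  qed
  have "h^2 * L \<le> h^2 * (sqrt P * h powr (-(s+e+2)/2))"
    using L by (simp add: mult_left_mono)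
  also have "\<dots> = sqrt P * h powr (1 - (s+e)/2)"
  proof -
    have "h^2 = h powr 2" using h by (simp only: powr_numeral)
    hence "h^2 * h powr (-(s+e+2)/2) = h powr (2 + (-(s+e+2)/2))" by (simp add: powr_add)
    also have "2 + (-(s+e+2)/2) = 1 - (s+e)/2" by (simp add: field_simps)
    finally show ?thesis by (simp add: algebra_simps)
  qed
  also have "\<dots> \<le> sqrt P * h powr ((s+2)/p)"
    by (intro mult_left_mono powr_mono') (use h ex P in auto)
  also have "\<dots> = sqrt P * Q powr (1/p) * (Q powr (-1/p) * h powr ((s+2)/p))"
  proof -
    have "Q powr (1/p) * Q powr (-1/p) = 1" using Q by (simp add: powr_add[symmetric])
    thus ?thesis by (simp add: algebra_simps)
  qed
  also have "\<dots> \<le> sqrt P * Q powr (1/p) * v"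
    by (intro mult_left_mono lower_from_powr) (use v p Q h hv P in auto)
  finally show ?thesis .
qed



lemma interp_x_node: "hx > 0 \<Longrightarrow> interp_x hx G (of_int i * hx, y) = G (of_int i * hx, y)"
  unfolding interp_x_def Let_def by simp

lemma interp_y_node: "hy > 0 \<Longrightarrow> interp_y hy G (x, of_int j * hy) = G (x, of_int j * hy)"
  unfolding interp_y_def Let_def by simp

lemma interp_xy_node: "hx > 0 \<Longrightarrow> hy > 0 \<Longrightarrow>
   interp_xy hx hy g (of_int i * hx, of_int j * hy) = g (of_int i * hx, of_int j * hy)"
  unfolding interp_xy_def by (simp add: interp_x_node interp_y_node)

lemma interp_y_nonneg: "(\<And>w. G w \<ge> 0) \<Longrightarrow> interp_y hy G z \<ge> 0"
  unfolding interp_y_def Let_def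
  by (intro add_nonneg_nonneg mult_nonneg_nonneg) (auto simp: algebra_simps, linarith)

lemma interp_x_nonneg: "(\<And>w. G w \<ge> 0) \<Longrightarrow> interp_x hx G z \<ge> 0"
  unfolding interp_x_def Let_def
  by (intro add_nonneg_nonneg mult_nonneg_nonneg) (auto simp: algebra_simps, linarith)

lemma integral_nonneg_any: 
  fixes f :: "'a::euclidean_space \<Rightarrow> real"
  shows "(\<And>x. f x \<ge> 0) \<Longrightarrow> integral S f \<ge> 0"
  by (cases "f integrable_on S") (auto intro: integral_nonneg simp: not_integrable_integral)

lemma periodic_nat:
  fixes f :: "real \<Rightarrow> real"
  assumes "\<And>x. f (x + L) = f x"
  shows "f (x + real n * L) = f x"
proof (induction n)
  case 0 then show ?case by simp
next
  case (Suc n)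
  have "x + real (Suc n) * L = (x + real n * L) + L" by (simp add: algebra_simps)
  then show ?case using assms[of "x + real n * L"] Suc by (simp only:)
qed

lemma periodic_int:
  fixes f :: "real \<Rightarrow> real"
  assumes "\<And>x. f (x + L) = f x"
  shows "f (x + of_int k * L) = f x"
proof (cases "k \<ge> 0")
  case True
  then obtain n where "k = int n" by (metis nonneg_eq_int)
  then show ?thesis using periodic_nat[of f L, OF assms] by simp
next
  case False
  define n where "n = nat (-k)"
  have k: "k = - int n" using False by (simp add: n_def)
  have "f x = f ((x + of_int k * L) + real n * L)" by (simp add: k)
  also have "\<dots> = f (x + of_int k * L)" by (rule periodic_nat[of f L, OF assms])
  finally show ?thesis by simp
qed

lemma harnack:
  fixes hx hy a b c d e K :: real
  assumes "hx > 0" "hy > 0" "a > 0" "b > 0" "c > 0" "d > 0" "e > 0"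
    and "(a + b - 2*c)/hx^2 + (d + e - 2*c)/hy^2 \<le> K"
  shows "a \<le> hx^2 * K + (2 + 2*hx^2/hy^2) * c"
proof -
  have "b/hx^2 \<ge> 0" "d/hy^2 \<ge> 0" "e/hy^2 \<ge> 0" using assms by auto
  moreover have "(a + b - 2*c)/hx^2 + (d + e - 2*c)/hy^2 = a/hx^2 + b/hx^2 - 2*c/hx^2 + d/hy^2 + e/hy^2 - 2*c/hy^2"
    by (simp add: diff_divide_distrib add_divide_distrib)
  ultimately have "a/hx^2 \<le> K + 2*c/hx^2 + 2*c/hy^2" using assms(8) by linarith
  hence "hx^2 * (a/hx^2) \<le> hx^2 * (K + 2*c/hx^2 + 2*c/hy^2)" by (rule mult_left_mono) simp
  moreover have "hx^2 * (a/hx^2) = a" using assms by simp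
  moreover have "hx^2 * (K + 2*c/hx^2 + 2*c/hy^2) = hx^2 * K + (2 + 2*hx^2/hy^2) * c"
    using assms by (simp add: field_simps)
  ultimately show ?thesis using assms by simp
qed


lemma harnack4:
  fixes hx hy a b c d e K :: real
  assumes hx: "hx > 0" and hy: "hy > 0" and pos: "a > 0" "b > 0" "c > 0" "d > 0" "e > 0"
    and K: "(a - 2*c + b)/hx^2 + (d - 2*c + e)/hy^2 \<le> K"
  shows "a \<le> hx^2 * K + (2 + 2*(hx^2/hy^2)) * c \<and> b \<le> hx^2 * K + (2 + 2*(hx^2/hy^2)) * c \<and>
         d \<le> hy^2 * K + (2 + 2*(hy^2/hx^2)) * c \<and> e \<le> hy^2 * K + (2 + 2*(hy^2/hx^2)) * c"
proof -
  have e1: "a - 2*c + b = a + b - 2*c" "a - 2*c + b = b + a - 2*c"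
    "d - 2*c + e = d + e - 2*c" "d - 2*c + e = e + d - 2*c" by simp_all
  have 1: "(a + b - 2*c)/hx^2 + (d + e - 2*c)/hy^2 \<le> K" using K e1 by simp
  have 2: "(b + a - 2*c)/hx^2 + (d + e - 2*c)/hy^2 \<le> K" using 1 by (simp add: add.commute)
  have 3: "(d + e - 2*c)/hy^2 + (a + b - 2*c)/hx^2 \<le> K" using 1 by (simp add: add.commute)
  have 4: "(e + d - 2*c)/hy^2 + (a + b - 2*c)/hx^2 \<le> K" using 1 by (simp add: add.commute)
  show ?thesis
    using harnack[OF hx hy pos(1,2,3,4,5) 1] harnack[OF hx hy pos(2,1,3,4,5) 2]
      harnack[OF hy hx pos(4,5,3,1,2) 3] harnack[OF hy hx pos(5,4,3,1,2) 4]
    by (simp add: times_divide_eq_right)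
qed

theorem lemma3p4:
  fixes Lx Ly c1hat C2hat p eps rho gamma C :: real
    and F F' F'' :: "real \<Rightarrow> real"
  assumes Lx: "Lx > 0" and Ly: "Ly > 0"
    and S: "0 < c1hat" "c1hat \<le> C2hat"
    and F_deriv: "\<forall>u>0. (F has_real_derivative F' u) (at u)"
    and F'_deriv: "\<forall>u>0. (F' has_real_derivative F'' u) (at u)"
    and F''_cont: "continuous_on {0<..} F''"
    and p: "p > 2"
    and F_lower: "\<exists>c1>0. \<forall>u>0. F u \<ge> c1 * u powr (-p)"
    and F'_bound: "\<exists>Ch>0. \<forall>u>0. \<bar>F' u\<bar> \<le> Ch * u powr (-p-1) + Ch"
    and F''_bound: "\<exists>ct1>0. \<exists>ct2>0. \<exists>Ct>0. \<forall>u>0.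
                      ct1 * u powr (-p-2) - ct2 \<le> F'' u \<and> F'' u \<le> Ct * u powr (-p-2) + Ct"
    and eps: "0 < eps" "eps < 2"
    and rho: "rho > 0"
    and gamma: "gamma < 1" "gamma \<ge> 2/p + eps/2 + rho/(2*p)"
    and C: "C > 0"
  shows "\<exists>Cosc>0. \<forall>h (Nx::nat) (Ny::nat) u.
           0 < h \<longrightarrow> h < 1 \<longrightarrow> 0 < Nx \<longrightarrow> 0 < Ny \<longrightarrow>
           c1hat * h \<le> Lx / Nx \<longrightarrow> Lx / Nx \<le> C2hat * h \<longrightarrow>
           c1hat * h \<le> Ly / Ny \<longrightarrow> Ly / Ny \<le> C2hat * h \<longrightarrow>
           u \<in> Uh Lx Ly (Lx / Nx) (Ly / Ny) \<longrightarrow> (\<forall>z. u z > 0) \<longrightarrow>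
           energy_h Lx Ly (Lx / Nx) (Ly / Ny) h eps F u \<le> C * h powr (-rho/(2+p)) \<longrightarrow>
           (\<forall>i j ih jh :: int. 1 \<le> i \<longrightarrow> i \<le> int Nx \<longrightarrow> 1 \<le> j \<longrightarrow> j \<le> int Ny \<longrightarrow>
              ih \<in> {i-1, i, i+1} \<longrightarrow> jh \<in> {j-1, j, j+1} \<longrightarrow>
              u (node (Lx / Nx) i, node (Ly / Ny) j) / u (node (Lx / Nx) ih, node (Ly / Ny) jh) \<le> Cosc)"
proof -
  have c2pos: "C2hat > 0" using S by linarith
  obtain c1F where c1F: "c1F > 0" and Flow: "\<And>v. v > 0 \<Longrightarrow> F v \<ge> c1F * v powr (-p)"
    using F_lower by blast
  define \<sigma> where "\<sigma> = rho/(2+p)"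
  define r where "r = C2hat / c1hat"
  define A where "A = 2 + 2*r^2"
  define P where "P = 32*C/c1hat^2"
  define Q where "Q = 16*C/(c1F*c1hat^2)"
  define W where "W = sqrt P * Q powr (1/p)"
  define \<Lambda> where "\<Lambda> = A + C2hat^2 * W"
  have Ppos: "P > 0" unfolding P_def using C S by simp
  have Qpos: "Q > 0" unfolding Q_def using C S c1F by simp
  have Wnn: "W \<ge> 0" unfolding W_def using Ppos by simp
  have \<Lambda>1: "\<Lambda> \<ge> 1" unfolding \<Lambda>_def A_def using Wnn by simp
  have ex: "(\<sigma>+2)/p \<le> 1 - (\<sigma>+eps)/2"
  proof -
    have "(\<sigma>+2)/p + (\<sigma>+eps)/2 = 2/p + eps/2 + rho/(2*p)"
    proof -
      have a: "\<sigma> * (2+p) = rho" unfolding \<sigma>_def using p by simp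
      have "(\<sigma>+2)/p + (\<sigma>+eps)/2 = 2/p + eps/2 + (\<sigma>*(2+p))/(2*p)"
        using p by (simp add: field_simps)
      thus ?thesis unfolding a .
    qed
    thus ?thesis using gamma by linarith
  qed
  have sig: "-rho/(2+p) = -\<sigma>" unfolding \<sigma>_def by simp
  show ?thesis
  proof (rule exI[of _ "\<Lambda>^2"], intro conjI allI impI)
    show "\<Lambda>^2 > 0" using \<Lambda>1 by simp
  next
    fix h :: real and Nx Ny :: nat and u :: "real\<times>real \<Rightarrow> real" and i j ih jh :: int
    assume h0: "0 < h" and h1: "h < 1" and Nx: "0 < Nx" and Ny: "0 < Ny"
      and hx1: "c1hat * h \<le> Lx / Nx" and hx2: "Lx / Nx \<le> C2hat * h"
      and hy1: "c1hat * h \<le> Ly / Ny" and hy2: "Ly / Ny \<le> C2hat * h"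
      and uU: "u \<in> Uh Lx Ly (Lx / Nx) (Ly / Ny)" and upos: "\<forall>z. u z > 0"
      and E: "energy_h Lx Ly (Lx / Nx) (Ly / Ny) h eps F u \<le> C * h powr (-rho/(2+p))"
      and i: "1 \<le> i" "i \<le> int Nx" and j: "1 \<le> j" "j \<le> int Ny"
      and ih: "ih \<in> {i-1, i, i+1}" and jh: "jh \<in> {j-1, j, j+1}"
    define hx where "hx = Lx / real Nx"
    define hy where "hy = Ly / real Ny"
    have hx0: "hx > 0" unfolding hx_def using Lx Nx by simp
    have hy0: "hy > 0" unfolding hy_def using Ly Ny by simp
    have Lxe: "Lx = real Nx * hx" unfolding hx_def using Nx by simp
    have Lye: "Ly = real Ny * hy" unfolding hy_def using Ny by simp
    have perx: "\<And>x y. u (x + Lx, y) = u (x, y)" and pery: "\<And>x y. u (x, y + Ly) = u (x, y)"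
      using uU unfolding Uh_def by auto
    define U where "U = (\<lambda>i j. u (node hx i, node hy j))"
    have Upos: "U a b > 0" for a b unfolding U_def using upos by simp
    define Lap where "Lap = (\<lambda>i j. five_point hx hy u (node hx i, node hy j))"
    have np: "node h' k + h' = node h' (k+1)" "node h' k - h' = node h' (k-1)" for h' k
      unfolding node_def by (simp_all add: algebra_simps)
    have FP: "Lap a b = (U (a+1) b - 2*U a b + U (a-1) b)/hx^2 + (U a (b+1) - 2*U a b + U a (b-1))/hy^2" for a b
      unfolding Lap_def U_def five_point_def by (simp add: np)
    have Uper1: "U (a + k*int Nx) b = U a b" for a b k
    proof -
      have "node hx (a + k*int Nx) = node hx a + of_int k * Lx"
        unfolding node_def Lxe by (simp add: algebra_simps)
      thus ?thesis unfolding U_def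
        using periodic_int[of "\<lambda>s. u (s, node hy b)" Lx "node hx a" k] perx by simp
    qed
    have Uper2: "U a (b + k*int Ny) = U a b" for a b k
    proof -
      have "node hy (b + k*int Ny) = node hy b + of_int k * Ly"
        unfolding node_def Lye by (simp add: algebra_simps)
      thus ?thesis unfolding U_def
        using periodic_int[of "\<lambda>s. u (node hx a, s)" Ly "node hy b" k] pery by simp
    qed
    have Lper1: "Lap (a + k*int Nx) b = Lap a b" for a b k
    proof -
      have "U (a + k*int Nx + 1) b = U (a+1) b" using Uper1[of "a+1"] by (simp add: algebra_simps)
      moreover have "U (a + k*int Nx - 1) b = U (a-1) b" using Uper1[of "a-1"] by (simp add: algebra_simps)
      moreover have "U (a + k*int Nx) (b+1) = U a (b+1)" "U (a + k*int Nx) (b-1) = U a (b-1)"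
        using Uper1 by simp_all
      ultimately show ?thesis unfolding FP using Uper1 by simp
    qed
    have Lper2: "Lap a (b + k*int Ny) = Lap a b" for a b k
    proof -
      have "U a (b + k*int Ny + 1) = U a (b+1)" using Uper2[of _ "b+1"] by (simp add: algebra_simps)
      moreover have "U a (b + k*int Ny - 1) = U a (b-1)" using Uper2[of _ "b-1"] by (simp add: algebra_simps)
      moreover have "U (a+1) (b + k*int Ny) = U (a+1) b" "U (a-1) (b + k*int Ny) = U (a-1) b"
        using Uper2 by simp_all
      ultimately show ?thesis unfolding FP using Uper2 by simp
    qed
    define T1 where "T1 = integral (cbox (0,0) (Lx,Ly))
        (\<lambda>z. interp_y hy (\<lambda>w. (pdx u w)\<^sup>2) z + interp_x hx (\<lambda>w. (pdy u w)\<^sup>2) z)"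
    define T2 where "T2 = integral (cbox (0,0) (Lx,Ly)) (interp_xy hx hy (\<lambda>w. F (u w)))"
    define T3 where "T3 = integral (cbox (0,0) (Lx,Ly)) (interp_xy hx hy (\<lambda>w. (disc_lap hx hy u w)\<^sup>2))"
    have Eeq: "energy_h Lx Ly (Lx / Nx) (Ly / Ny) h eps F u = 1/2*T1 + T2 + h powr eps / 2 * T3"
      unfolding energy_h_def T1_def T2_def T3_def hx_def hy_def by simp
    have T1nn: "T1 \<ge> 0" unfolding T1_def
      by (intro integral_nonneg_any add_nonneg_nonneg interp_y_nonneg interp_x_nonneg) simp_all
    have Fpos: "F v > 0" if "v > 0" for v
      using Flow[OF that] c1F that by (smt (verit) mult_pos_pos powr_gt_zero)
    have T2lb: "hx*hy/16 * F (U a b) \<le> T2" if "1 \<le> a" "a \<le> int Nx" "1 \<le> b" "b \<le> int Ny" for a b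
    proof -
      have "hx*hy/16 * (\<lambda>w. F (u w)) (of_int (a-1) * hx, of_int (b-1) * hy) \<le> T2"
        unfolding T2_def
        by (rule interp_integral_lb[OF hx0 hy0 Lxe Lye]) (use that Fpos upos in \<open>auto intro: less_imp_le\<close>)
      thus ?thesis unfolding U_def node_def by simp
    qed
    have T3lb: "hx*hy/16 * (Lap a b)^2 \<le> T3" if "1 \<le> a" "a \<le> int Nx" "1 \<le> b" "b \<le> int Ny" for a b
    proof -
      have "hx*hy/16 * (\<lambda>w. (disc_lap hx hy u w)\<^sup>2) (of_int (a-1) * hx, of_int (b-1) * hy) \<le> T3"
        unfolding T3_def
        by (rule interp_integral_lb[OF hx0 hy0 Lxe Lye]) (use that in auto)
      thus ?thesis unfolding Lap_def disc_lap_def interp_xy_node[OF hx0 hy0] node_def .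
    qed
    have T2nn: "T2 \<ge> 0"
    proof -
      have "0 \<le> hx*hy/16 * F (U 1 1)" using hx0 hy0 Fpos[OF Upos, of 1 1] by simp
      also have "\<dots> \<le> T2" by (rule T2lb) (use Nx Ny in auto)
      finally show ?thesis .
    qed
    have T3nn: "T3 \<ge> 0"
    proof -
      have "0 \<le> hx*hy/16 * (Lap 1 1)^2" using hx0 hy0 by simp
      also have "\<dots> \<le> T3" by (rule T3lb) (use Nx Ny in auto)
      finally show ?thesis .
    qed
    have hpe: "h powr eps > 0" using h0 by simp
    have Eb: "1/2*T1 + T2 + h powr eps / 2 * T3 \<le> C * h powr (-\<sigma>)" using E Eeq sig by simp
    have hxy: "c1hat^2 * h^2 \<le> hx * hy"
    proof -
      have "(c1hat*h) * (c1hat*h) \<le> hx * hy"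
        by (rule mult_mono) (use hx1 hy1 S h0 hy0 hx0 in \<open>auto simp: hx_def hy_def\<close>)
      thus ?thesis by (simp add: power2_eq_square algebra_simps)
    qed
    have ch2: "c1hat^2 * h^2 > 0" using S h0 by simp
    have hpow: "h powr (-(s+2)) = h powr (-s) / h^2" for s
    proof -
      have "h powr (-(s+2)) = h powr (-s) * h powr (-2)" by (simp add: powr_add[symmetric])
      also have "h powr (-2) = inverse (h^2)" using h0 by (simp add: powr_minus)
      finally show ?thesis by (simp add: divide_inverse)
    qed
    have inrange: "h^2 * Lap a b \<le> W * U a b" if ab: "1 \<le> a" "a \<le> int Nx" "1 \<le> b" "b \<le> int Ny" for a b
    proof -
      have T3e: "0 \<le> h powr eps / 2 * T3" using hpe T3nn by simp
      have vb: "U a b powr (-p) \<le> Q * h powr (-(\<sigma>+2))"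
      proof -
        define X where "X = U a b powr (-p)"
        have X0: "X \<ge> 0" unfolding X_def by simp
        have s1: "hx*hy/16 * (c1F * X) \<le> hx*hy/16 * F (U a b)"
          unfolding X_def using Flow[OF Upos, of a b] hx0 hy0 by (simp add: mult_left_mono)
        have s2: "hx*hy/16 * F (U a b) \<le> C * h powr (-\<sigma>)"
          using T2lb[OF ab] T1nn T3e Eb by linarith
        have D0: "c1hat^2 * h^2 * c1F / 16 > 0" using ch2 c1F by simp
        have s3: "(c1hat^2 * h^2) * (c1F * X / 16) \<le> (hx*hy) * (c1F * X / 16)"
          by (rule mult_right_mono[OF hxy]) (use c1F X0 in simp)
        have e1: "X * (c1hat^2 * h^2 * c1F / 16) = (c1hat^2 * h^2) * (c1F * X / 16)" by (simp add: algebra_simps)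
        have e2: "hx*hy/16 * (c1F * X) = (hx*hy) * (c1F * X / 16)" by (simp add: algebra_simps)
        have "X * (c1hat^2 * h^2 * c1F / 16) \<le> C * h powr (-\<sigma>)"
          using s1 s2 s3 e1 e2 by linarith
        hence "X \<le> C * h powr (-\<sigma>) / (c1hat^2 * h^2 * c1F / 16)"
          by (simp only: pos_le_divide_eq[OF D0])
        also have "\<dots> = Q * h powr (-(\<sigma>+2))" unfolding Q_def hpow using c1F S h0 by (simp add: field_simps)
        finally show ?thesis unfolding X_def .
      qed
      have lb: "(Lap a b)^2 \<le> P * h powr (-(\<sigma>+eps+2))"
      proof -
        define Y where "Y = (Lap a b)^2"
        have Y0: "Y \<ge> 0" unfolding Y_def by simp
        have s1: "h powr eps / 2 * (hx*hy/16 * Y) \<le> h powr eps / 2 * T3"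
          unfolding Y_def using T3lb[OF ab] hpe by simp
        have s2: "h powr eps / 2 * T3 \<le> C * h powr (-\<sigma>)" using T1nn T2nn Eb by linarith
        have D0: "h powr eps * c1hat^2 * h^2 / 32 > 0" using mult_pos_pos[OF hpe ch2] by (simp add: mult.assoc)
        have s3: "(c1hat^2 * h^2) * (h powr eps * Y / 32) \<le> (hx*hy) * (h powr eps * Y / 32)"
          by (rule mult_right_mono[OF hxy]) (use hpe Y0 in simp)
        have e1: "Y * (h powr eps * c1hat^2 * h^2 / 32) = (c1hat^2 * h^2) * (h powr eps * Y / 32)" by (simp add: algebra_simps)
        have e2: "h powr eps / 2 * (hx*hy/16 * Y) = (hx*hy) * (h powr eps * Y / 32)" by (simp add: algebra_simps)
        have "Y * (h powr eps * c1hat^2 * h^2 / 32) \<le> C * h powr (-\<sigma>)"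
          using s1 s2 s3 e1 e2 by linarith
        hence "Y \<le> C * h powr (-\<sigma>) / (h powr eps * c1hat^2 * h^2 / 32)"
          by (simp only: pos_le_divide_eq[OF D0])
        also have "\<dots> = P * h powr (-(\<sigma>+eps+2))"
        proof -
          have "h powr (-(\<sigma>+eps+2)) = h powr (-\<sigma>) / h powr eps / h^2"
          proof -
            have "h powr (-(\<sigma>+eps)) = h powr (-\<sigma>) / h powr eps"
              using powr_diff[of h "-\<sigma>" eps] by simp
            thus ?thesis using hpow[of "\<sigma>+eps"] by simp
          qed
          thus ?thesis unfolding P_def using S h0 hpe by (simp add: field_simps)
        qed
        finally show ?thesis unfolding Y_def .
      qed
      show ?thesis unfolding W_def
        by (rule key_ineq[OF h0 h1 Upos _ Qpos less_imp_le[OF Ppos] vb lb ex]) (use p in auto)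
    qed
    have allnodes: "h^2 * Lap a b \<le> W * U a b" for a b
    proof -
      define a' where "a' = (a-1) mod int Nx + 1"
      define b' where "b' = (b-1) mod int Ny + 1"
      have a: "a = a' + ((a-1) div int Nx) * int Nx" unfolding a'_def
        by (metis add.commute diff_add_cancel div_mult_mod_eq add.assoc)
      have b: "b = b' + ((b-1) div int Ny) * int Ny" unfolding b'_def
        by (metis add.commute diff_add_cancel div_mult_mod_eq add.assoc)
      have "(a-1) mod int Nx < int Nx" "(a-1) mod int Nx \<ge> 0" using Nx by simp_all
      hence ra: "1 \<le> a'" "a' \<le> int Nx" unfolding a'_def by linarith+
      have "(b-1) mod int Ny < int Ny" "(b-1) mod int Ny \<ge> 0" using Ny by simp_all
      hence rb: "1 \<le> b'" "b' \<le> int Ny" unfolding b'_def by linarith+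
      have "Lap a b = Lap a' b'" using Lper1 Lper2 a b by metis
      moreover have "U a b = U a' b'" using Uper1 Uper2 a b by metis
      ultimately show ?thesis using inrange[OF ra rb] by simp
    qed
    have rbound: "hx^2/hy^2 \<le> r^2" "hy^2/hx^2 \<le> r^2"
    proof -
      have ch: "c1hat * h > 0" using S h0 by simp
      have "hx/hy \<le> (C2hat*h)/(c1hat*h)"
        by (rule frac_le) (use hx2 hy1 hx0 ch c2pos h0 in \<open>auto simp: hx_def hy_def\<close>)
      also have "\<dots> = r" unfolding r_def using h0 by simp
      finally have 1: "hx/hy \<le> r" .
      have "hy/hx \<le> (C2hat*h)/(c1hat*h)"
        by (rule frac_le) (use hy2 hx1 hy0 ch c2pos h0 in \<open>auto simp: hx_def hy_def\<close>)
      also have "\<dots> = r" unfolding r_def using h0 by simp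
      finally have 2: "hy/hx \<le> r" .
      have "(hx/hy)^2 \<le> r^2" by (rule power_mono[OF 1]) (use hx0 hy0 in simp)
      moreover have "(hy/hx)^2 \<le> r^2" by (rule power_mono[OF 2]) (use hx0 hy0 in simp)
      ultimately show "hx^2/hy^2 \<le> r^2" "hy^2/hx^2 \<le> r^2" by (simp_all add: power_divide)
    qed
    have hsq: "hx^2 \<le> C2hat^2 * h^2" "hy^2 \<le> C2hat^2 * h^2"
      using power_mono[OF hx2[folded hx_def] less_imp_le[OF hx0]] power_mono[OF hy2[folded hy_def] less_imp_le[OF hy0]]
      by (simp_all add: power_mult_distrib)
    have Kb: "hh^2 * Lap a b \<le> C2hat^2 * W * U a b" if "hh^2 \<le> C2hat^2 * h^2" for a b hh
    proof (cases "Lap a b \<le> 0")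
      case True
      have "hh^2 * Lap a b \<le> 0" using True by (simp add: mult_nonneg_nonpos)
      also have "0 \<le> C2hat^2 * W * U a b" using Wnn Upos[of a b] by simp
      finally show ?thesis .
    next
      case False
      have "hh^2 * Lap a b \<le> C2hat^2 * h^2 * Lap a b" using that False by (simp add: mult_right_mono)
      also have "\<dots> \<le> C2hat^2 * (W * U a b)" using allnodes[of a b] by (simp add: mult_left_mono mult.assoc)
      finally show ?thesis by (simp add: mult.assoc)
    qed
    have Ab: "(2 + 2*t) * U a b \<le> A * U a b" if "t \<le> r^2" for t a b
      unfolding A_def using that Upos[of a b] by (simp add: mult_right_mono)
    have neigh: "U (a+1) b \<le> \<Lambda> * U a b \<and> U (a-1) b \<le> \<Lambda> * U a b \<and>
                 U a (b+1) \<le> \<Lambda> * U a b \<and> U a (b-1) \<le> \<Lambda> * U a b" for a b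
    proof -
      have H: "U (a+1) b \<le> hx^2 * Lap a b + (2 + 2*(hx^2/hy^2)) * U a b \<and>
           U (a-1) b \<le> hx^2 * Lap a b + (2 + 2*(hx^2/hy^2)) * U a b \<and>
           U a (b+1) \<le> hy^2 * Lap a b + (2 + 2*(hy^2/hx^2)) * U a b \<and>
           U a (b-1) \<le> hy^2 * Lap a b + (2 + 2*(hy^2/hx^2)) * U a b"
        by (rule harnack4[OF hx0 hy0 Upos[of "a+1" b] Upos[of "a-1" b] Upos[of a b] Upos[of a "b+1"]
               Upos[of a "b-1"] FP[of a b, symmetric, THEN eq_refl]])
      have K1: "hx^2 * Lap a b \<le> C2hat^2 * W * U a b" by (rule Kb[OF hsq(1)])
      have K2: "hy^2 * Lap a b \<le> C2hat^2 * W * U a b" by (rule Kb[OF hsq(2)])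
      have A1: "(2 + 2*(hx^2/hy^2)) * U a b \<le> A * U a b" by (rule Ab[OF rbound(1)])
      have A2: "(2 + 2*(hy^2/hx^2)) * U a b \<le> A * U a b" by (rule Ab[OF rbound(2)])
      have L: "\<Lambda> * U a b = A * U a b + C2hat^2 * W * U a b" unfolding \<Lambda>_def by (simp add: algebra_simps)
      show ?thesis using H K1 K2 A1 A2 L by linarith
    qed
    have self: "U a b \<le> \<Lambda> * U a b" for a b
      using mult_right_mono[OF \<Lambda>1 less_imp_le[OF Upos[of a b]]] by simp
    have step1: "U i j \<le> \<Lambda> * U ih j"
    proof -
      consider "i = ih + 1" | "i = ih" | "i = ih - 1" using ih by auto
      thus ?thesis using neigh[of ih j] self[of ih j] by cases simp_all
    qed
    have step2: "U ih j \<le> \<Lambda> * U ih jh"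
    proof -
      consider "j = jh + 1" | "j = jh" | "j = jh - 1" using jh by auto
      thus ?thesis using neigh[of ih jh] self[of ih jh] by cases simp_all
    qed
    have "\<Lambda> * U ih j \<le> \<Lambda> * (\<Lambda> * U ih jh)" by (rule mult_left_mono[OF step2]) (use \<Lambda>1 in simp)
    hence "U i j \<le> \<Lambda>^2 * U ih jh"
      using step1 by (simp add: power2_eq_square mult.assoc)
    hence "U i j / U ih jh \<le> \<Lambda>^2" using Upos[of ih jh] by (simp add: pos_divide_le_eq)
    thus "u (node (Lx / Nx) i, node (Ly / Ny) j) / u (node (Lx / Nx) ih, node (Ly / Ny) jh) \<le> \<Lambda>^2"
      unfolding U_def hx_def hy_def .
  qed
qed

end
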